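(* Let $(\mathfrak g,\mathcal F_\bullet\mathfrak g,R)$ be a filtered Rota–Baxter Lie algebra over a field of characteristic zero. For every $n\ge1$, $\mathcal F_nU(\mathfrak g)=\mathcal F_nU(\mathfrak g_R)$ as subspaces of $U(\mathfrak g)$.
   Context: Filtered Rota–Baxter Lie algebra: a Lie algebra $\mathfrak g$ with subspaces $\mathfrak g=\mathcal F_1\mathfrak g\supset\mathcal F_2\mathfrak g\supset\cdots$, $[\mathcal F_n\mathfrak g,\mathcal F_m\mathfrak g]\subset\mathcal F_{n+m}\mathfrak g$, and a linear map $R$ with $[R(x),R(y)]=R([R(x),y]+[x,R(y)]+[x,y])$ and $R(\mathcal F_n\mathfrak g)\subset\mathcal F_n\mathfrak g$. Let $\mathcal R:U(\mathfrak g)\to U(\mathfrak g)$ be the well-defined linear map with $\mathcal R(1)=1$, $\mathcal R(x)=R(x)$, $\mathcal R(xh)=R(x)\mathcal R(h)-\mathcal R([R(x),h])$ ($x\in\mathfrak g$, $h\in U(\mathfrak g)$). Define $a\star b=a_{(1)}\mathcal R(a_{(2)})\,b\,S(\mathcal R(a_{(3)}))$ on $U(\mathfrak g)$ (Sweedler notation). The descendant Lie algebra $\mathfrak g_R$ is $\mathfrak g$ with bracket $[x,y]_R=[R(x),y]+[x,R(y)]+[x,y]$; the algebra $(U(\mathfrak g),\star)$ is identified with $U(\mathfrak g_R)$ (identity on $\mathfrak g$). $\mathcal F_nU(\mathfrak g)$ ($n\ge1$) is the span of products $x_1\cdots x_k$ in $U(\mathfrak g)$ with $k\ge1$, $x_i\in\mathcal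 F_{n_i}\mathfrak g$, $\sum n_i\ge n$; $\mathcal F_nU(\mathfrak g_R)$ is the span of $x_1\star x_2\star\cdots\star x_k$ with the same conditions. *)

theory Defs
  imports Complex_Main "HOL-Library.Poly_Mapping"
begin

definition lie_algebra :: "('k::field \<Rightarrow> 'g::ab_group_add \<Rightarrow> 'g) \<Rightarrow> ('g \<Rightarrow> 'g \<Rightarrow> 'g) \<Rightarrow> bool" where
  "lie_algebra scale br \<longleftrightarrow>
     Vector_Spaces.vector_space scale \<and>
     (\<forall>x y z. br (x + y) z = br x z + br y z) \<and>
     (\<forall>x y z. br x (y + z) = br x y + br x z) \<and>
     (\<forall>c x y. br (scale c x) y = scale c (br x y)) \<and>
     (\<forall>c x y. br x (scale c y) = scale c (br x y)) \<and>
     (\<forall>x. br x x = 0) \<and>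
     (\<forall>x y z. br x (br y z) + br y (br z x) + br z (br x y) = 0)"

definition rota_baxter :: "('k::field \<Rightarrow> 'g::ab_group_add \<Rightarrow> 'g) \<Rightarrow> ('g \<Rightarrow> 'g \<Rightarrow> 'g) \<Rightarrow> ('g \<Rightarrow> 'g) \<Rightarrow> bool" where
  "rota_baxter scale br R \<longleftrightarrow>
     Vector_Spaces.linear scale scale R \<and>
     (\<forall>x y. br (R x) (R y) = R (br (R x) y + br x (R y) + br x y))"

text \<open>Filtration g = F 1 \<supseteq> F 2 \<supseteq> ... by subspaces with [F n, F m] \<subseteq> F (n+m).
  Only the indices n \<ge> 1 are meaningful; F 0 is irrelevant.\<close>

definition lie_filtration :: "('k::field \<Rightarrow> 'g::ab_group_add \<Rightarrow> 'g) \<Rightarrow> ('g \<Rightarrow> 'g \<Rightarrow> 'g) \<Rightarrow> (nat \<Rightarrow> 'g set) \<Rightarrow> bool" where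
  "lie_filtration scale br F \<longleftrightarrow>
     F 1 = UNIV \<and>
     (\<forall>n\<ge>1. module.subspace scale (F n)) \<and>
     (\<forall>n\<ge>1. F (Suc n) \<subseteq> F n) \<and>
     (\<forall>n\<ge>1. \<forall>m\<ge>1. \<forall>x\<in>F n. \<forall>y\<in>F m. br x y \<in> F (n + m))"

definition filtered_rota_baxter_lie :: "('k::field \<Rightarrow> 'g::ab_group_add \<Rightarrow> 'g) \<Rightarrow> ('g \<Rightarrow> 'g \<Rightarrow> 'g) \<Rightarrow> (nat \<Rightarrow> 'g set) \<Rightarrow> ('g \<Rightarrow> 'g) \<Rightarrow> bool" where
  "filtered_rota_baxter_lie scale br F R \<longleftrightarrow>
     lie_algebra scale br \<and> lie_filtration scale br F \<and> rota_baxter scale br R \<and>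
     (\<forall>n\<ge>1. R ` F n \<subseteq> F n)"

text \<open>The free associative 'k-algebra on the underlying set of g: finitely supported
  'k-valued functions on words. U(g) is its quotient by the two-sided ideal UIdeal
  generated by the linearity relations and x y - y x - [x,y]. Subspaces of U(g) are
  represented by their preimages in the free algebra (subspaces containing UIdeal).\<close>

type_synonym ('g, 'k) free_alg = "'g list \<Rightarrow>\<^sub>0 'k"

definition wd :: "'g list \<Rightarrow> ('g, 'k::field) free_alg" where
  "wd w = Poly_Mapping.single w 1"

definition smul :: "'k::field \<Rightarrow> ('g, 'k) free_alg \<Rightarrow> ('g, 'k) free_alg" where
  "smul c p = Poly_Mapping.map ((*) c) p"

definition lin :: "('g list \<Rightarrow> ('h, 'k::field) free_alg) \<Rightarrow> ('g, 'k) free_alg \<Rightarrow> ('h, 'k) free_alg" where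
  "lin f p = (\<Sum>u\<in>Poly_Mapping.keys p. smul (Poly_Mapping.lookup p u) (f u))"

definition fmul :: "('g, 'k::field) free_alg \<Rightarrow> ('g, 'k) free_alg \<Rightarrow> ('g, 'k) free_alg" where
  "fmul p q = lin (\<lambda>u. lin (\<lambda>v. wd (u @ v)) q) p"

inductive_set kspan :: "('g, 'k::field) free_alg set \<Rightarrow> ('g, 'k) free_alg set" for S where
  kspan_zero: "0 \<in> kspan S"
| kspan_step: "s \<in> S \<Longrightarrow> p \<in> kspan S \<Longrightarrow> smul c s + p \<in> kspan S"

definition env_rels :: "('k::field \<Rightarrow> 'g::ab_group_add \<Rightarrow> 'g) \<Rightarrow> ('g \<Rightarrow> 'g \<Rightarrow> 'g) \<Rightarrow> ('g, 'k) free_alg set" where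
  "env_rels scale br =
     {wd [x + y] - wd [x] - wd [y] | x y. True} \<union>
     {wd [scale c x] - smul c (wd [x]) | c x. True} \<union>
     {wd [x, y] - wd [y, x] - wd [br x y] | x y. True}"

definition UIdeal :: "('k::field \<Rightarrow> 'g::ab_group_add \<Rightarrow> 'g) \<Rightarrow> ('g \<Rightarrow> 'g \<Rightarrow> 'g) \<Rightarrow> ('g, 'k) free_alg set" where
  "UIdeal scale br = kspan {fmul (wd u) (fmul r (wd v)) | u r v. r \<in> env_rels scale br}"

definition antipode :: "('g, 'k::field) free_alg \<Rightarrow> ('g, 'k) free_alg" where
  "antipode = lin (\<lambda>w. smul ((-1) ^ length w) (wd (rev w)))"

function calR :: "('g \<Rightarrow> 'g \<Rightarrow> 'g) \<Rightarrow> ('g \<Rightarrow> 'g) \<Rightarrow> 'g list \<Rightarrow> ('g, 'k::field) free_alg" where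
  "calR br R [] = wd []"
| "calR br R (x # h) = fmul (wd [R x]) (calR br R h)
      - (\<Sum>i<length h. calR br R (h[i := br (R x) (h ! i)]))"
  by pat_completeness auto
termination by (relation "measure (\<lambda>(_, _, w). length w)") auto

text \<open>Iterated coproduct of a word of primitive elements: sum over all ways to
  distribute the letters (keeping order) among three tensor factors.\<close>
definition labelings :: "'g list \<Rightarrow> nat list set" where
  "labelings w = {ls. length ls = length w \<and> set ls \<subseteq> {0, 1, 2}}"

definition subword :: "'g list \<Rightarrow> nat list \<Rightarrow> nat \<Rightarrow> 'g list" where
  "subword w ls j = map fst (filter (\<lambda>p. snd p = j) (zip w ls))"

text \<open>a \<star> b = a_(1) \<R>(a_(2)) b S(\<R>(a_(3))).\<close>
definition star :: "('g \<Rightarrow> 'g \<Rightarrow> 'g) \<Rightarrow> ('g \<Rightarrow> 'g) \<Rightarrow> ('g, 'k::field) free_alg \<Rightarrow> ('g, 'k) free_alg \<Rightarrow> ('g, 'k) free_alg" where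
  "star br R a b = lin (\<lambda>w. \<Sum>ls\<in>labelings w.
       fmul (wd (subword w ls 0))
         (fmul (calR br R (subword w ls 1))
           (fmul b (antipode (calR br R (subword w ls 2)))))) a"

fun star_word :: "('g \<Rightarrow> 'g \<Rightarrow> 'g) \<Rightarrow> ('g \<Rightarrow> 'g) \<Rightarrow> 'g list \<Rightarrow> ('g, 'k::field) free_alg" where
  "star_word br R [] = wd []"
| "star_word br R [x] = wd [x]"
| "star_word br R (x # y # xs) = star br R (wd [x]) (star_word br R (y # xs))"

definition filt_weight :: "(nat \<Rightarrow> 'g set) \<Rightarrow> nat \<Rightarrow> 'g list \<Rightarrow> bool" where
  "filt_weight F n xs \<longleftrightarrow> xs \<noteq> [] \<and>
     (\<exists>ns. length ns = length xs \<and> (\<forall>i<length xs. ns ! i \<ge> 1 \<and> xs ! i \<in> F (ns ! i))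
           \<and> sum_list ns \<ge> n)"

text \<open>Preimage in the free algebra of F_n U(g).\<close>
definition FU :: "('k::field \<Rightarrow> 'g::ab_group_add \<Rightarrow> 'g) \<Rightarrow> ('g \<Rightarrow> 'g \<Rightarrow> 'g) \<Rightarrow> (nat \<Rightarrow> 'g set) \<Rightarrow> nat \<Rightarrow> ('g, 'k) free_alg set" where
  "FU scale br F n = kspan ({wd xs | xs. filt_weight F n xs} \<union> UIdeal scale br)"

text \<open>Preimage in the free algebra of F_n U(g_R), viewed inside U(g) via \<star>.\<close>
definition FUR :: "('k::field \<Rightarrow> 'g::ab_group_add \<Rightarrow> 'g) \<Rightarrow> ('g \<Rightarrow> 'g \<Rightarrow> 'g) \<Rightarrow> (nat \<Rightarrow> 'g set) \<Rightarrow> ('g \<Rightarrow> 'g) \<Rightarrow> nat \<Rightarrow> ('g, 'k) free_alg set" where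
  "FUR scale br F R n = kspan ({star_word br R xs | xs. filt_weight F n xs} \<union> UIdeal scale br)"

end

theory Submission
  imports Defs
begin

lemma lookup_smul: "Poly_Mapping.lookup (smul c p) k = c * Poly_Mapping.lookup p k"
  by (simp add: smul_def map.rep_eq when_def)

lemma smul_add: "smul c (p + q) = smul c p + smul c q"
  by (rule poly_mapping_eqI) (simp add: lookup_smul lookup_add algebra_simps)

lemma smul_add2: "smul (a + b) p = smul a p + smul b p"
  by (rule poly_mapping_eqI) (simp add: lookup_smul lookup_add algebra_simps)

lemma smul_smul: "smul c (smul d p) = smul (c * d) p"
  by (rule poly_mapping_eqI) (simp add: lookup_smul)

lemma smul_one[simp]: "smul 1 p = p"
  by (rule poly_mapping_eqI) (simp add: lookup_smul)

lemma smul_zero[simp]: "smul c 0 = 0"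
  by (rule poly_mapping_eqI) (simp add: lookup_smul)

lemma smul_zero2[simp]: "smul 0 p = 0"
  by (rule poly_mapping_eqI) (simp add: lookup_smul)

lemma smul_neg1: "smul (-1) p = - p"
  by (rule poly_mapping_eqI) (simp add: lookup_smul)

lemma smul_minus: "smul c (p - q) = smul c p - smul c q"
  by (rule poly_mapping_eqI) (simp add: lookup_smul lookup_minus algebra_simps)

lemma smul_uminus: "smul c (- p) = - smul c p"
  by (rule poly_mapping_eqI) (simp add: lookup_smul)

lemma smul_sum: "smul c (sum f A) = (\<Sum>a\<in>A. smul c (f a))"
  by (rule poly_mapping_eqI) (simp add: lookup_smul lookup_sum sum_distrib_left)

lemma keys_smul: "Poly_Mapping.keys (smul c p) \<subseteq> Poly_Mapping.keys p"
  by (auto simp: in_keys_iff lookup_smul)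

lemma lin_superset:
  assumes "finite A" "Poly_Mapping.keys p \<subseteq> A"
  shows "lin f p = (\<Sum>u\<in>A. smul (Poly_Mapping.lookup p u) (f u))"
  unfolding lin_def
  by (rule sum.mono_neutral_left) (use assms in \<open>auto simp: in_keys_iff\<close>)

lemma lin_add: "lin f (p + q) = lin f p + lin f q"
proof -
  let ?A = "Poly_Mapping.keys p \<union> Poly_Mapping.keys q"
  have "lin f (p + q) = (\<Sum>u\<in>?A. smul (Poly_Mapping.lookup (p+q) u) (f u))"
    by (rule lin_superset) (auto simp: keys_add)
  also have "\<dots> = (\<Sum>u\<in>?A. smul (Poly_Mapping.lookup p u) (f u)) + (\<Sum>u\<in>?A. smul (Poly_Mapping.lookup q u) (f u))"
    by (simp add: lookup_add smul_add2 sum.distrib)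
  also have "\<dots> = lin f p + lin f q"
    by (subst (1 2) lin_superset[symmetric]) auto
  finally show ?thesis .
qed

lemma lin_smul: "lin f (smul c p) = smul c (lin f p)"
proof -
  have "lin f (smul c p) = (\<Sum>u\<in>Poly_Mapping.keys p. smul (Poly_Mapping.lookup (smul c p) u) (f u))"
    by (rule lin_superset) (auto simp: keys_smul)
  also have "\<dots> = smul c (lin f p)"
    by (simp add: lin_def smul_sum lookup_smul smul_smul)
  finally show ?thesis .
qed

lemma lin_wd[simp]: "lin f (wd u) = f u"
  by (simp add: lin_def wd_def)

lemma lin_zero[simp]: "lin f 0 = 0"
  by (simp add: lin_def)

lemma lin_fadd: "lin (\<lambda>u. f u + g u) p = lin f p + lin g p"
  by (simp add: lin_def smul_add sum.distrib)

lemma lin_fsmul: "lin (\<lambda>u. smul c (f u)) p = smul c (lin f p)"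
  by (simp add: lin_def smul_sum smul_smul mult.commute)

lemma lin_wd_id: "lin wd p = p"
proof (rule poly_mapping_eqI)
  fix k
  have "Poly_Mapping.lookup (lin wd p) k = (\<Sum>x\<in>Poly_Mapping.keys p. if x = k then Poly_Mapping.lookup p x else 0)"
    by (simp add: lin_def wd_def lookup_sum lookup_smul lookup_single when_def if_distrib cong: if_cong)
  also have "\<dots> = Poly_Mapping.lookup p k"
    by (auto simp: sum.delta' in_keys_iff)
  finally show "Poly_Mapping.lookup (lin wd p) k = Poly_Mapping.lookup p k" .
qed

definition flin :: "(('g, 'k::field) free_alg \<Rightarrow> ('h, 'k) free_alg) \<Rightarrow> bool" where
  "flin L \<longleftrightarrow> (\<forall>p q. L (p + q) = L p + L q) \<and> (\<forall>c p. L (smul c p) = smul c (L p))"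

lemma flin_add: "flin L \<Longrightarrow> L (p + q) = L p + L q" by (simp add: flin_def)
lemma flin_smul: "flin L \<Longrightarrow> L (smul c p) = smul c (L p)" by (simp add: flin_def)
lemma flin_zero: "flin L \<Longrightarrow> L 0 = 0"
  using flin_add[of L 0 0] by simp
lemma flin_uminus: "flin L \<Longrightarrow> L (- p) = - L p"
  using flin_smul[of L "-1" p] by (simp add: smul_neg1)
lemma flin_diff: "flin L \<Longrightarrow> L (p - q) = L p - L q"
  using flin_add[of L p "-q"] flin_uminus[of L q] by simp
lemma flin_sum: "flin L \<Longrightarrow> L (sum f A) = (\<Sum>a\<in>A. L (f a))"
  by (induction A rule: infinite_finite_induct) (auto simp: flin_zero flin_add)

lemma flin_lin: "flin (lin f)"
  by (simp add: flin_def lin_add lin_smul)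

lemma flin_expand: "flin L \<Longrightarrow> L p = lin (\<lambda>u. L (wd u)) p"
proof -
  assume L: "flin L"
  have "L p = L (lin wd p)" by (simp add: lin_wd_id)
  also have "\<dots> = lin (\<lambda>u. L (wd u)) p"
    unfolding lin_def by (simp add: flin_sum[OF L] flin_smul[OF L])
  finally show ?thesis .
qed

lemma flin_eqI: "flin L1 \<Longrightarrow> flin L2 \<Longrightarrow> (\<And>u. L1 (wd u) = L2 (wd u)) \<Longrightarrow> L1 p = L2 p"
proof -
  assume a: "flin L1" "flin L2" "\<And>u. L1 (wd u) = L2 (wd u)"
  have "L1 p = lin (\<lambda>u. L1 (wd u)) p" by (rule flin_expand[OF a(1)])
  also have "\<dots> = lin (\<lambda>u. L2 (wd u)) p" by (simp only: a(3))
  also have "\<dots> = L2 p" by (rule flin_expand[OF a(2), symmetric])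
  finally show ?thesis .
qed

lemma flin_comp: "flin L1 \<Longrightarrow> flin L2 \<Longrightarrow> flin (\<lambda>p. L1 (L2 p))"
  by (simp add: flin_def)

lemma flin_plus: "flin L1 \<Longrightarrow> flin L2 \<Longrightarrow> flin (\<lambda>p. L1 p + L2 p)"
  by (simp add: flin_def smul_add algebra_simps)

lemma flin_minus: "flin L1 \<Longrightarrow> flin L2 \<Longrightarrow> flin (\<lambda>p. L1 p - L2 p)"
  by (simp add: flin_def smul_minus algebra_simps)

lemma flin_fmul_left: "flin (\<lambda>p. fmul p q)"
  unfolding fmul_def by (rule flin_lin)

lemma flin_fmul_right: "flin (\<lambda>q. fmul p q)"
  unfolding fmul_def flin_def by (simp add: lin_add lin_smul lin_fadd lin_fsmul)

lemma fmul_wd[simp]: "fmul (wd u) (wd v) = wd (u @ v)"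
  by (simp add: fmul_def)

lemma fmul_assoc: "fmul (fmul p q) r = fmul p (fmul q r)"
proof -
  have A: "fmul (fmul (wd a) (wd b)) r = fmul (wd a) (fmul (wd b) r)" for a b
    by (rule flin_eqI[of "\<lambda>r. fmul (fmul (wd a) (wd b)) r" "\<lambda>r. fmul (wd a) (fmul (wd b) r)" r]) (auto intro: flin_comp flin_fmul_right)
  have B: "fmul (fmul (wd a) q) r = fmul (wd a) (fmul q r)" for a
    by (rule flin_eqI[of "\<lambda>q. fmul (fmul (wd a) q) r" "\<lambda>q. fmul (wd a) (fmul q r)" q])
       (auto intro: flin_comp flin_fmul_right flin_fmul_left simp: A[simplified])
  show ?thesis
    by (rule flin_eqI[of "\<lambda>p. fmul (fmul p q) r" "\<lambda>p. fmul p (fmul q r)" p])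
       (auto intro: flin_comp flin_fmul_left B)
qed

lemma fmul_one_left[simp]: "fmul (wd []) p = p"
  using flin_eqI[OF flin_fmul_right[of "wd []"], of "\<lambda>p. p" p] by (simp add: flin_def)

lemma fmul_one_right[simp]: "fmul p (wd []) = p"
  using flin_eqI[OF flin_fmul_left[of "wd []"], of "\<lambda>p. p" p] by (simp add: flin_def)


lemma kspan_base: "s \<in> S \<Longrightarrow> s \<in> kspan S"
  using kspan_step[of s S 0 1] kspan_zero[of S] by simp

lemma kspan_add: "p \<in> kspan S \<Longrightarrow> q \<in> kspan S \<Longrightarrow> p + q \<in> kspan S"
  by (induction p rule: kspan.induct) (auto simp: add.assoc intro: kspan.intros)

lemma kspan_smul: "p \<in> kspan S \<Longrightarrow> smul c p \<in> kspan S"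
  by (induction p rule: kspan.induct) (auto simp: smul_add smul_smul intro: kspan.intros)

lemma kspan_uminus: "p \<in> kspan S \<Longrightarrow> - p \<in> kspan S"
  using kspan_smul[of p S "-1"] by (simp add: smul_neg1)

lemma kspan_diff: "p \<in> kspan S \<Longrightarrow> q \<in> kspan S \<Longrightarrow> p - q \<in> kspan S"
  using kspan_add[of p S "-q"] kspan_uminus[of q S] by simp

lemma kspan_sum: "(\<And>a. a \<in> A \<Longrightarrow> f a \<in> kspan S) \<Longrightarrow> sum f A \<in> kspan S"
  by (induction A rule: infinite_finite_induct) (auto intro: kspan_add kspan.intros)

lemma kspan_subset: "p \<in> kspan S \<Longrightarrow> S \<subseteq> kspan T \<Longrightarrow> p \<in> kspan T"
  by (induction p rule: kspan.induct) (auto intro: kspan_add kspan_smul kspan.intros)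

lemma kspan_mono: "S \<subseteq> T \<Longrightarrow> p \<in> kspan S \<Longrightarrow> p \<in> kspan T"
  by (erule kspan_subset) (auto intro: kspan_base)

lemma kspan_map:
  assumes "flin L" "\<And>s. s \<in> S \<Longrightarrow> L s \<in> kspan T" "p \<in> kspan S"
  shows "L p \<in> kspan T"
  using assms(3)
  by (induction p rule: kspan.induct)
     (auto simp: flin_zero[OF assms(1)] flin_add[OF assms(1)] flin_smul[OF assms(1)]
           intro: kspan_add kspan_smul kspan.intros assms(2))

lemma UIdeal_gen: "r \<in> env_rels scale br \<Longrightarrow> fmul (wd u) (fmul r (wd v)) \<in> UIdeal scale br"
  unfolding UIdeal_def by (rule kspan_base) blast

lemma UIdeal_lmul: "p \<in> UIdeal scale br \<Longrightarrow> fmul (wd a) p \<in> UIdeal scale br"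
  unfolding UIdeal_def
proof (erule kspan_map[OF flin_fmul_right, rotated])
  fix s assume "s \<in> {fmul (wd u) (fmul r (wd v)) |u r v. r \<in> env_rels scale br}"
  then obtain u r v where s: "s = fmul (wd u) (fmul r (wd v))" and r: "r \<in> env_rels scale br" by blast
  have "fmul (wd a) s = fmul (wd (a @ u)) (fmul r (wd v))"
    unfolding s fmul_assoc[symmetric, of "wd a" "wd u"] by simp
  then show "fmul (wd a) s \<in> kspan {fmul (wd u) (fmul r (wd v)) |u r v. r \<in> env_rels scale br}"
    using UIdeal_gen[OF r, unfolded UIdeal_def] by simp
qed

lemma UIdeal_rmul: "p \<in> UIdeal scale br \<Longrightarrow> fmul p (wd a) \<in> UIdeal scale br"
  unfolding UIdeal_def
proof (erule kspan_map[OF flin_fmul_left, rotated])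
  fix s assume "s \<in> {fmul (wd u) (fmul r (wd v)) |u r v. r \<in> env_rels scale br}"
  then obtain u r v where s: "s = fmul (wd u) (fmul r (wd v))" and r: "r \<in> env_rels scale br" by blast
  have "fmul s (wd a) = fmul (wd u) (fmul r (wd (v @ a)))"
    unfolding s fmul_assoc by simp
  then show "fmul s (wd a) \<in> kspan {fmul (wd u) (fmul r (wd v)) |u r v. r \<in> env_rels scale br}"
    using UIdeal_gen[OF r, unfolded UIdeal_def] by simp
qed

lemma UIdeal_comm:
  "wd [x, y] - wd [y, x] - wd [br x y] \<in> env_rels scale br"
  unfolding env_rels_def by blast

lemma fmul_diff_left: "fmul (p - q) r = fmul p r - fmul q r"
  by (rule flin_diff[OF flin_fmul_left])
lemma fmul_diff_right: "fmul r (p - q) = fmul r p - fmul r q"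
  by (rule flin_diff[OF flin_fmul_right])
lemma fmul_add_right: "fmul r (p + q) = fmul r p + fmul r q"
  by (rule flin_add[OF flin_fmul_right])
lemma fmul_sum_right: "fmul r (sum f A) = (\<Sum>a\<in>A. fmul r (f a))"
  by (rule flin_sum[OF flin_fmul_right])

lemma commutator_mod:
  "wd (y # W) - wd (W @ [y]) - (\<Sum>i<length W. wd (W[i := br y (W ! i)])) \<in> UIdeal scale br"
proof (induction W)
  case Nil
  then show ?case by (simp add: UIdeal_def kspan_zero)
next
  case (Cons a W)
  let ?S = "(\<Sum>i<length W. wd (W[i := br y (W ! i)]))"
  have g: "fmul (wd []) (fmul (wd [y, a] - wd [a, y] - wd [br y a]) (wd W)) \<in> UIdeal scale br"
    by (rule UIdeal_gen[OF UIdeal_comm])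
  have g': "wd (y # a # W) - wd (a # y # W) - wd (br y a # W) \<in> UIdeal scale br"
    using g by (simp add: fmul_diff_left)
  have h: "fmul (wd [a]) (wd (y # W) - wd (W @ [y]) - ?S) \<in> UIdeal scale br"
    by (rule UIdeal_lmul[OF Cons])
  have h': "wd (a # y # W) - wd (a # W @ [y]) - (\<Sum>i<length W. wd (a # W[i := br y (W ! i)])) \<in> UIdeal scale br"
    using h by (simp add: fmul_diff_right fmul_sum_right)
  have sumeq: "(\<Sum>i<length (a # W). wd ((a # W)[i := br y ((a # W) ! i)]))
      = wd (br y a # W) + (\<Sum>i<length W. wd (a # W[i := br y (W ! i)]))"
    by (simp only: length_Cons sum.lessThan_Suc_shift) simp
  have eq: "wd (y # a # W) - wd ((a # W) @ [y]) - (\<Sum>i<length (a # W). wd ((a # W)[i := br y ((a # W) ! i)]))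
     = (wd (y # a # W) - wd (a # y # W) - wd (br y a # W)) +
       (wd (a # y # W) - wd (a # W @ [y]) - (\<Sum>i<length W. wd (a # W[i := br y (W ! i)])))"
    by (simp only: sumeq) (simp add: algebra_simps)
  show ?case
    using kspan_add[OF g'[unfolded UIdeal_def] h'[unfolded UIdeal_def]] unfolding eq UIdeal_def .
qed

lemma labelings_single: "labelings [x] = {[0], [1], [2]}"
proof (rule set_eqI)
  fix ls :: "nat list"
  show "ls \<in> labelings [x] \<longleftrightarrow> ls \<in> {[0], [1], [2]}"
    unfolding labelings_def by (cases ls) auto
qed

lemma antipode_wd: "antipode (wd w) = smul ((-1) ^ length w) (wd (rev w))"
  by (simp add: antipode_def)

lemma calR_nil: "calR br R [] = wd []"
  by simp

lemma calR_single: "calR br R [x] = wd [R x]"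
  by simp
lemma sw: "subword [x] [0] 0 = [x]" "subword [x] [0] (Suc 0) = []" "subword [x] [0] 2 = []"
  "subword [x] [Suc 0] 0 = []" "subword [x] [Suc 0] (Suc 0) = [x]" "subword [x] [Suc 0] 2 = []"
  "subword [x] [2] 0 = []" "subword [x] [2] (Suc 0) = []" "subword [x] [2] 2 = [x]"
  by (simp_all add: subword_def)

lemma star_single:
  "star br R (wd [x]) b = fmul (wd [x]) b + fmul (wd [R x]) b - fmul b (wd [R x])"
proof -
  let ?f = "\<lambda>ls. fmul (wd (subword [x] ls 0))
         (fmul (calR br R (subword [x] ls 1))
           (fmul b (antipode (calR br R (subword [x] ls 2)))))"
  have "star br R (wd [x]) b = sum ?f {[0], [1], [2]}"
    unfolding star_def lin_wd labelings_single by (rule refl)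
  also have "\<dots> = ?f [0] + (?f [1] + ?f [2])"
    by (subst sum.insert; simp)+
  also have "?f [0] = fmul (wd [x]) b"
    by (simp only: sw One_nat_def calR_nil antipode_wd fmul_one_left fmul_one_right) (simp add: antipode_wd)
  also have "?f [1] = fmul (wd [R x]) b"
    by (simp only: sw One_nat_def calR_nil calR_single antipode_wd fmul_one_left fmul_one_right) (simp add: antipode_wd)
  also have "?f [2] = fmul b (smul (-1) (wd [R x]))"
    by (simp only: sw One_nat_def calR_nil calR_single antipode_wd fmul_one_left fmul_one_right) simp
  also have "fmul b (smul (-1) (wd [R x])) = - fmul b (wd [R x])"
    by (simp add: smul_neg1 flin_uminus[OF flin_fmul_right])
  finally show ?thesis by simp
qed

lemma fw_nonempty: "filt_weight F m xs \<Longrightarrow> xs \<noteq> []"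
  by (simp add: filt_weight_def)

lemma fw_mono: "filt_weight F m xs \<Longrightarrow> m' \<le> m \<Longrightarrow> filt_weight F m' xs"
  unfolding filt_weight_def by (meson order_trans)

lemma fw_cons_intro:
  assumes "x \<in> F k" "1 \<le> k" "filt_weight F m ys"
  shows "filt_weight F (k + m) (x # ys)"
proof -
  obtain ns where ns: "length ns = length ys" "\<forall>i<length ys. ns ! i \<ge> 1 \<and> ys ! i \<in> F (ns ! i)"
    "sum_list ns \<ge> m"
    using assms(3) unfolding filt_weight_def by blast
  have "\<forall>i<length (x # ys). (k # ns) ! i \<ge> 1 \<and> (x # ys) ! i \<in> F ((k # ns) ! i)"
  proof (intro allI impI)
    fix i assume "i < length (x # ys)"
    then show "(k # ns) ! i \<ge> 1 \<and> (x # ys) ! i \<in> F ((k # ns) ! i)"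
      using ns assms by (cases i) auto
  qed
  then show ?thesis unfolding filt_weight_def
    by (intro conjI exI[of _ "k # ns"]) (use ns in auto)
qed

lemma fw_snoc_intro:
  assumes "x \<in> F k" "1 \<le> k" "filt_weight F m ys"
  shows "filt_weight F (k + m) (ys @ [x])"
proof -
  obtain ns where ns: "length ns = length ys" "\<forall>i<length ys. ns ! i \<ge> 1 \<and> ys ! i \<in> F (ns ! i)"
    "sum_list ns \<ge> m"
    using assms(3) unfolding filt_weight_def by blast
  have "\<forall>i<length (ys @ [x]). (ns @ [k]) ! i \<ge> 1 \<and> (ys @ [x]) ! i \<in> F ((ns @ [k]) ! i)"
  proof (intro allI impI)
    fix i assume "i < length (ys @ [x])"
    then show "(ns @ [k]) ! i \<ge> 1 \<and> (ys @ [x]) ! i \<in> F ((ns @ [k]) ! i)"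
      using ns assms by (cases "i < length ys") (auto simp: nth_append)
  qed
  then show ?thesis unfolding filt_weight_def
    by (intro conjI exI[of _ "ns @ [k]"]) (use ns in auto)
qed

lemma fw_cons_elim:
  assumes "filt_weight F m (x # ys)" "ys \<noteq> []"
  obtains k m' where "1 \<le> k" "x \<in> F k" "filt_weight F m' ys" "m \<le> k + m'"
proof -
  obtain ns where ns: "length ns = length (x # ys)"
    "\<forall>i<length (x # ys). ns ! i \<ge> 1 \<and> (x # ys) ! i \<in> F (ns ! i)"
    "sum_list ns \<ge> m"
    using assms(1) unfolding filt_weight_def by blast
  then obtain k ns' where nsd: "ns = k # ns'" by (cases ns) auto
  have k: "1 \<le> k" "x \<in> F k" using ns(2)[rule_format, of 0] nsd by auto
  have "\<forall>i<length ys. ns' ! i \<ge> 1 \<and> ys ! i \<in> F (ns' ! i)"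
    using ns(2) nsd by auto
  then have "filt_weight F (sum_list ns') ys"
    unfolding filt_weight_def using assms(2) ns(1) nsd by auto
  moreover have "m \<le> k + sum_list ns'" using ns(3) nsd by simp
  ultimately show ?thesis using that k by blast
qed

lemma fw_update:
  assumes "filt_weight F m W" "i < length W"
    and br: "\<And>j z. 1 \<le> j \<Longrightarrow> z \<in> F j \<Longrightarrow> br y z \<in> F (k + j)"
  shows "filt_weight F (k + m) (W[i := br y (W ! i)])"
proof -
  obtain ns where ns: "length ns = length W" "\<forall>i<length W. ns ! i \<ge> 1 \<and> W ! i \<in> F (ns ! i)"
    "sum_list ns \<ge> m"
    using assms(1) unfolding filt_weight_def by blast
  let ?ns = "ns[i := k + ns ! i]"
  have A: "\<forall>j<length (W[i := br y (W ! i)]). ?ns ! j \<ge> 1 \<and> (W[i := br y (W ! i)]) ! j \<in> F (?ns ! j)"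
  proof (intro allI impI)
    fix j assume j: "j < length (W[i := br y (W ! i)])"
    show "?ns ! j \<ge> 1 \<and> (W[i := br y (W ! i)]) ! j \<in> F (?ns ! j)"
    proof (cases "j = i")
      case True
      then show ?thesis using ns assms(2) br[of "ns ! i" "W ! i"] by auto
    next
      case False
      then show ?thesis using ns j by auto
    qed
  qed
  have "sum_list ?ns = sum_list ns + (k + ns ! i) - ns ! i"
    using sum_list_update[of i ns "k + ns ! i"] ns(1) assms(2) by simp
  then have B: "sum_list ?ns \<ge> k + m" using ns(3) by simp
  show ?thesis unfolding filt_weight_def
    by (intro conjI exI[of _ ?ns]) (use A B ns(1) assms(2) in auto)
qed

lemma UIdeal_add: "p \<in> UIdeal scale br \<Longrightarrow> q \<in> UIdeal scale br \<Longrightarrow> p + q \<in> UIdeal scale br"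
  unfolding UIdeal_def by (rule kspan_add)
lemma UIdeal_diff: "p \<in> UIdeal scale br \<Longrightarrow> q \<in> UIdeal scale br \<Longrightarrow> p - q \<in> UIdeal scale br"
  unfolding UIdeal_def by (rule kspan_diff)

definition Sx :: "('g \<Rightarrow> 'g) \<Rightarrow> 'g \<Rightarrow> ('g, 'k::field) free_alg \<Rightarrow> ('g, 'k) free_alg" where
  "Sx R x b = fmul (wd [x]) b + fmul (wd [R x]) b - fmul b (wd [R x])"

lemma flin_Sx: "flin (Sx R x)"
  unfolding Sx_def
  by (intro flin_minus flin_plus flin_fmul_right flin_fmul_left)

lemma star_Sx: "star br R (wd [x]) b = Sx R x b"
  by (simp add: star_single Sx_def)

lemma Sx_UIdeal: "p \<in> UIdeal scale br \<Longrightarrow> Sx R x p \<in> UIdeal scale br"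
  unfolding Sx_def by (intro UIdeal_diff UIdeal_add UIdeal_lmul UIdeal_rmul)

lemma Sx_wd: "Sx R x (wd ys) = wd (x # ys) + wd (R x # ys) - wd (ys @ [R x])"
  by (simp add: Sx_def)

lemma FU_mono: "m \<le> m' \<Longrightarrow> p \<in> FU scale br F m' \<Longrightarrow> p \<in> FU scale br F m"
  unfolding FU_def by (erule kspan_mono[rotated]) (auto intro: fw_mono)

lemma FUR_mono: "m \<le> m' \<Longrightarrow> p \<in> FUR scale br F R m' \<Longrightarrow> p \<in> FUR scale br F R m"
  unfolding FUR_def by (erule kspan_mono[rotated]) (auto intro: fw_mono)

lemma star_word_cons: "ys \<noteq> [] \<Longrightarrow> star_word br R (x # ys) = Sx R x (star_word br R ys)"
  by (cases ys) (auto simp: star_Sx)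

lemma starword_FU:
  assumes hR: "\<And>k z. 1 \<le> k \<Longrightarrow> z \<in> F k \<Longrightarrow> R z \<in> F k"
  shows "filt_weight F m xs \<Longrightarrow> star_word br R xs \<in> FU scale br F m"
proof (induction xs arbitrary: m)
  case Nil
  then show ?case using fw_nonempty by blast
next
  case (Cons x W)
  show ?case
  proof (cases "W = []")
    case True
    then show ?thesis using Cons.prems unfolding FU_def by (auto intro: kspan_base)
  next
    case False
    obtain k m' where k: "1 \<le> k" "x \<in> F k" "filt_weight F m' W" "m \<le> k + m'"
      using fw_cons_elim[OF Cons.prems False] by blast
    have IH: "star_word br R W \<in> FU scale br F m'" using Cons.IH[OF k(3)] .
    have Rx: "R x \<in> F k" using hR k by blast
    have "Sx R x (star_word br R W) \<in> FU scale br F (k + m')"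
      using IH unfolding FU_def
    proof (rule kspan_map[OF flin_Sx, rotated])
      fix s assume "s \<in> {wd xs |xs. filt_weight F m' xs} \<union> UIdeal scale br"
      then show "Sx R x s \<in> kspan ({wd xs |xs. filt_weight F (k + m') xs} \<union> UIdeal scale br)"
      proof
        assume "s \<in> {wd xs |xs. filt_weight F m' xs}"
        then obtain ys where s: "s = wd ys" "filt_weight F m' ys" by blast
        have 1: "filt_weight F (k + m') (x # ys)" by (rule fw_cons_intro[OF k(2) k(1) s(2)])
        have 2: "filt_weight F (k + m') (R x # ys)" by (rule fw_cons_intro[OF Rx k(1) s(2)])
        have 3: "filt_weight F (k + m') (ys @ [R x])" by (rule fw_snoc_intro[OF Rx k(1) s(2)])
        show ?thesis unfolding s(1) Sx_wd
          using 1 2 3 by (blast intro: kspan_add kspan_diff kspan_base)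
      next
        assume "s \<in> UIdeal scale br"
        then show ?thesis by (blast intro: kspan_base Sx_UIdeal)
      qed
    qed
    then show ?thesis
      unfolding star_word_cons[OF False] by (rule FU_mono[OF k(4)])
  qed
qed

lemma wd_FUR:
  assumes hR: "\<And>k z. 1 \<le> k \<Longrightarrow> z \<in> F k \<Longrightarrow> R z \<in> F k"
    and hF: "\<And>a b y z. 1 \<le> a \<Longrightarrow> 1 \<le> b \<Longrightarrow> y \<in> F a \<Longrightarrow> z \<in> F b \<Longrightarrow> br y z \<in> F (a + b)"
  shows "length xs = N \<Longrightarrow> filt_weight F m xs \<Longrightarrow> wd xs \<in> FUR scale br F R m"
proof (induction N arbitrary: xs m rule: less_induct)
  case (less N)
  obtain x W where xs: "xs = x # W" using fw_nonempty[OF less.prems(2)] by (cases xs) auto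
  show ?case
  proof (cases "W = []")
    case True
    have "star_word br R [x] \<in> {star_word br R xs |xs. filt_weight F m xs}"
      using less.prems(2) unfolding xs True by blast
    then have "star_word br R [x] \<in> FUR scale br F R m"
      unfolding FUR_def by (intro kspan_base UnI1)
    then show ?thesis using xs True by simp
  next
    case False
    obtain k m' where k: "1 \<le> k" "x \<in> F k" "filt_weight F m' W" "m \<le> k + m'"
      using fw_cons_elim[OF less.prems(2)[unfolded xs] False] by blast
    have lenW: "length W < N" using less.prems(1) xs by simp
    have IH: "wd W \<in> FUR scale br F R m'" using less.IH[OF lenW refl k(3)] .
    have Rx: "R x \<in> F k" using hR k by blast
    have P1: "Sx R x (wd W) \<in> FUR scale br F R (k + m')"
      using IH unfolding FUR_def
    proof (rule kspan_map[OF flin_Sx, rotated])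
      fix s assume "s \<in> {star_word br R xs |xs. filt_weight F m' xs} \<union> UIdeal scale br"
      then show "Sx R x s \<in> kspan ({star_word br R xs |xs. filt_weight F (k + m') xs} \<union> UIdeal scale br)"
      proof
        assume "s \<in> {star_word br R xs |xs. filt_weight F m' xs}"
        then obtain ys where s: "s = star_word br R ys" "filt_weight F m' ys" by blast
        have 1: "filt_weight F (k + m') (x # ys)" by (rule fw_cons_intro[OF k(2) k(1) s(2)])
        have "Sx R x s = star_word br R (x # ys)"
          unfolding s(1) by (rule star_word_cons[OF fw_nonempty[OF s(2)], symmetric])
        then show ?thesis using 1 by (blast intro: kspan_base)
      next
        assume "s \<in> UIdeal scale br"
        then show ?thesis by (blast intro: kspan_base Sx_UIdeal)
      qed
    qed
    have P1': "Sx R x (wd W) \<in> FUR scale br F R m" by (rule FUR_mono[OF k(4) P1])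
    let ?S = "\<Sum>i<length W. wd (W[i := br (R x) (W ! i)])"
    let ?D = "wd (R x # W) - wd (W @ [R x]) - ?S"
    have D: "?D \<in> FUR scale br F R m"
      using commutator_mod[where y="R x" and W=W and scale=scale and br=br] unfolding FUR_def by (blast intro: kspan_base)
    have S: "?S \<in> FUR scale br F R m"
      unfolding FUR_def
    proof (rule kspan_sum)
      fix i assume i: "i \<in> {..<length W}"
      have fw: "filt_weight F (k + m') (W[i := br (R x) (W ! i)])"
        by (rule fw_update[OF k(3)]) (use i hF[OF k(1) _ Rx] in auto)
      have "wd (W[i := br (R x) (W ! i)]) \<in> FUR scale br F R (k + m')"
        by (rule less.IH[OF _ refl fw]) (use lenW in simp)
      then show "wd (W[i := br (R x) (W ! i)]) \<in> kspan ({star_word br R xs |xs. filt_weight F m xs} \<union> UIdeal scale br)"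
        using FUR_mono[OF k(4)] unfolding FUR_def by blast
    qed
    have eq: "wd xs = Sx R x (wd W) - ?D - ?S"
      unfolding Sx_wd xs by (simp add: algebra_simps)
    show ?thesis unfolding eq using P1' D S unfolding FUR_def by (blast intro: kspan_diff)
  qed
qed

theorem proposition4p10:
  fixes scale :: "'k::field_char_0 \<Rightarrow> 'g::ab_group_add \<Rightarrow> 'g"
    and br :: "'g \<Rightarrow> 'g \<Rightarrow> 'g" and F :: "nat \<Rightarrow> 'g set" and R :: "'g \<Rightarrow> 'g"
    and n :: nat
  assumes "filtered_rota_baxter_lie scale br F R"
    and "n \<ge> 1"
  shows "FU scale br F n = FUR scale br F R n"
proof -
  have hR: "\<And>k z. 1 \<le> k \<Longrightarrow> z \<in> F k \<Longrightarrow> R z \<in> F k"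
    using assms(1) unfolding filtered_rota_baxter_lie_def by blast
  have hF: "\<And>a b y z. 1 \<le> a \<Longrightarrow> 1 \<le> b \<Longrightarrow> y \<in> F a \<Longrightarrow> z \<in> F b \<Longrightarrow> br y z \<in> F (a + b)"
    using assms(1) unfolding filtered_rota_baxter_lie_def lie_filtration_def by blast
  have sub1: "{wd xs |xs. filt_weight F n xs} \<union> UIdeal scale br \<subseteq> FUR scale br F R n"
    using wd_FUR[where F=F and R=R and br=br and scale=scale, OF hR hF refl] unfolding FUR_def by (blast intro: kspan_base)
  have sub2: "{star_word br R xs |xs. filt_weight F n xs} \<union> UIdeal scale br \<subseteq> FU scale br F n"
    using starword_FU[where F=F and R=R and br=br and scale=scale, OF hR] unfolding FU_def by (blast intro: kspan_base)
  show ?thesis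
  proof (rule set_eqI, rule iffI)
    fix p assume "p \<in> FU scale br F n"
    then show "p \<in> FUR scale br F R n"
      using kspan_subset[OF _ sub1[unfolded FUR_def]] unfolding FU_def FUR_def by blast
  next
    fix p assume "p \<in> FUR scale br F R n"
    then show "p \<in> FU scale br F n"
      using kspan_subset[OF _ sub2[unfolded FU_def]] unfolding FU_def FUR_def by blast
  qed
qed

end
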